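(* Let $\mathcal C\subseteq\{0,1,2\}^n$ be a ternary code all of whose codewords have $\ell_1$-weight $w$. Then $\mathcal C$ is an $(n,2w-2,w)_3$ code if and only if both of the following hold: (a') the cliques $K_u$, $u\in\mathcal C$, form a packing of $K_n$ (i.e., they are pairwise edge-disjoint); (b') each position $i\in[n]$ is colored by $2$ in at most one codeword, i.e., there is at most one $u\in\mathcal C$ with $u_i=2$.
   Context: The $\ell_1$-distance between $u,v\in\{0,1,2\}^n$ is $\sum_i|u_i-v_i|$ and the $\ell_1$-weight of $u$ is its distance to $0$. An $(n,d,w)_3$ code is a set of vectors in $\{0,1,2\}^n$ each of $\ell_1$-weight $w$ with pairwise $\ell_1$-distance at least $d$. $K_n$ is the complete graph on vertex set $[n]$. For $u\in\{0,1,2\}^n$, $K_u$ is the complete subgraph of $K_n$ on vertex set $\mathrm{supp}(u)=\{i:u_i\ne0\}$, with vertex $i$ colored by $u_i$. A packing of a graph is a set of subgraphs such that each edge lies in at most one of them. *)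

theory Defs
  imports Main
begin

text \<open>Ternary vectors of length n: functions nat => nat, positions 0..n-1 (standing for [n]),
  entries in {0,1,2}, zero outside the positions.\<close>
definition ternary_vec :: "nat \<Rightarrow> (nat \<Rightarrow> nat) \<Rightarrow> bool" where
  "ternary_vec n u \<longleftrightarrow> (\<forall>i<n. u i \<le> 2) \<and> (\<forall>i\<ge>n. u i = 0)"

definition l1_dist :: "nat \<Rightarrow> (nat \<Rightarrow> nat) \<Rightarrow> (nat \<Rightarrow> nat) \<Rightarrow> int" where
  "l1_dist n u v = (\<Sum>i<n. \<bar>int (u i) - int (v i)\<bar>)"

definition l1_weight :: "nat \<Rightarrow> (nat \<Rightarrow> nat) \<Rightarrow> int" where
  "l1_weight n u = l1_dist n u (\<lambda>_. 0)"

definition is_code3 :: "nat \<Rightarrow> int \<Rightarrow> int \<Rightarrow> (nat \<Rightarrow> nat) set \<Rightarrow> bool" where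
  "is_code3 n d w C \<longleftrightarrow>
     (\<forall>u\<in>C. ternary_vec n u \<and> l1_weight n u = w) \<and>
     (\<forall>u\<in>C. \<forall>v\<in>C. u \<noteq> v \<longrightarrow> l1_dist n u v \<ge> d)"

definition supp :: "nat \<Rightarrow> (nat \<Rightarrow> nat) \<Rightarrow> nat set" where
  "supp n u = {i. i < n \<and> u i \<noteq> 0}"

definition clique_edges :: "nat \<Rightarrow> (nat \<Rightarrow> nat) \<Rightarrow> nat set set" where
  "clique_edges n u = {{i, j} | i j. i \<in> supp n u \<and> j \<in> supp n u \<and> i \<noteq> j}"

definition clique_packing :: "nat \<Rightarrow> (nat \<Rightarrow> nat) set \<Rightarrow> bool" where
  "clique_packing n C \<longleftrightarrow>
     (\<forall>u\<in>C. \<forall>v\<in>C. u \<noteq> v \<longrightarrow> clique_edges n u \<inter> clique_edges n v = {})"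

end

theory Submission
  imports Defs
begin

lemma dist_eq:
  "l1_dist n u v = l1_weight n u + l1_weight n v - 2 * (\<Sum>i<n. int (min (u i) (v i)))"
proof -
  have "\<And>i. \<bar>int (u i) - int (v i)\<bar> = \<bar>int (u i) - int 0\<bar> + \<bar>int (v i) - int 0\<bar> - 2 * int (min (u i) (v i))"
    by (simp add: min_def)
  then show ?thesis
    unfolding l1_weight_def l1_dist_def
    by (simp add: sum.distrib sum_subtractf sum_distrib_left)
qed

lemma edges_disj:
  "clique_edges n u \<inter> clique_edges n v = {} \<longleftrightarrow>
   \<not> (\<exists>i j. i \<noteq> j \<and> i \<in> supp n u \<inter> supp n v \<and> j \<in> supp n u \<inter> supp n v)"
proof
  assume h: "clique_edges n u \<inter> clique_edges n v = {}"
  show "\<not> (\<exists>i j. i \<noteq> j \<and> i \<in> supp n u \<inter> supp n v \<and> j \<in> supp n u \<inter> supp n v)"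
  proof
    assume "\<exists>i j. i \<noteq> j \<and> i \<in> supp n u \<inter> supp n v \<and> j \<in> supp n u \<inter> supp n v"
    then obtain i j where "i \<noteq> j" "i \<in> supp n u \<inter> supp n v" "j \<in> supp n u \<inter> supp n v" by blast
    then have "{i,j} \<in> clique_edges n u \<inter> clique_edges n v"
      unfolding clique_edges_def by blast
    with h show False by blast
  qed
next
  assume h: "\<not> (\<exists>i j. i \<noteq> j \<and> i \<in> supp n u \<inter> supp n v \<and> j \<in> supp n u \<inter> supp n v)"
  show "clique_edges n u \<inter> clique_edges n v = {}"
  proof (rule ccontr)
    assume "clique_edges n u \<inter> clique_edges n v \<noteq> {}"
    then obtain e where e1: "e \<in> clique_edges n u" and e2: "e \<in> clique_edges n v" by blast
    from e1 obtain i j where ij: "e = {i,j}" "i \<in> supp n u" "j \<in> supp n u" "i \<noteq> j"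
      unfolding clique_edges_def by blast
    from e2 obtain i' j' where ij': "e = {i',j'}" "i' \<in> supp n v" "j' \<in> supp n v" "i' \<noteq> j'"
      unfolding clique_edges_def by blast
    have "i \<in> supp n v" "j \<in> supp n v" using ij ij' by (auto simp: doubleton_eq_iff)
    with ij h show False by blast
  qed
qed

lemma sum_min_le1:
  assumes tu: "ternary_vec n u" and tv: "ternary_vec n v"
  shows "(\<Sum>i<n. int (min (u i) (v i))) \<le> 1 \<longleftrightarrow>
     clique_edges n u \<inter> clique_edges n v = {} \<and> \<not> (\<exists>i<n. u i = 2 \<and> v i = 2)"
  (is "?S \<le> 1 \<longleftrightarrow> _")
proof -
  let ?P = "{i. i < n \<and> min (u i) (v i) > 0}"
  have Pint: "?P = supp n u \<inter> supp n v" unfolding supp_def by auto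
  have S_P: "?S = (\<Sum>i\<in>?P. int (min (u i) (v i)))"
    by (rule sum.mono_neutral_right) auto
  have finP: "finite ?P" by simp
  show ?thesis
  proof
    assume le: "?S \<le> 1"
    have A: "\<not> (\<exists>i j. i \<noteq> j \<and> i \<in> ?P \<and> j \<in> ?P)"
    proof
      assume "\<exists>i j. i \<noteq> j \<and> i \<in> ?P \<and> j \<in> ?P"
      then obtain i j where h: "i \<noteq> j" "i \<in> ?P" "j \<in> ?P" by blast
      have "(\<Sum>k\<in>{i,j}. int (min (u k) (v k))) \<le> (\<Sum>k\<in>?P. int (min (u k) (v k)))"
        by (rule sum_mono2) (use h in auto)
      moreover have "(\<Sum>k\<in>{i,j}. int (min (u k) (v k))) \<ge> 2" using h by auto
      ultimately show False using le S_P by linarith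
    qed
    have B: "\<not> (\<exists>i<n. u i = 2 \<and> v i = 2)"
    proof
      assume "\<exists>i<n. u i = 2 \<and> v i = 2"
      then obtain i where h: "i < n" "u i = 2" "v i = 2" by blast
      have "(\<Sum>k\<in>{i}. int (min (u k) (v k))) \<le> ?S"
        by (rule sum_mono2) (use h in auto)
      then show False using h le by simp
    qed
    show "clique_edges n u \<inter> clique_edges n v = {} \<and> \<not> (\<exists>i<n. u i = 2 \<and> v i = 2)"
      using A B Pint edges_disj by metis
  next
    assume "clique_edges n u \<inter> clique_edges n v = {} \<and> \<not> (\<exists>i<n. u i = 2 \<and> v i = 2)"
    then have A: "\<not> (\<exists>i j. i \<noteq> j \<and> i \<in> ?P \<and> j \<in> ?P)" and B: "\<not> (\<exists>i<n. u i = 2 \<and> v i = 2)"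
      using Pint edges_disj by metis+
    show "?S \<le> 1"
    proof (cases "?P = {}")
      case True have "?S = 0" by (simp only: S_P True sum.empty)
      then show ?thesis by simp
    next
      case False
      then obtain i where i: "i \<in> ?P" by blast
      with A have "?P = {i}" by blast
      then have "?S = int (min (u i) (v i))" using S_P by simp
      moreover have "u i \<le> 2" "v i \<le> 2" "i < n" using tu tv i unfolding ternary_vec_def by auto
      moreover have "min (u i) (v i) \<le> 1" using B \<open>u i \<le> 2\<close> \<open>v i \<le> 2\<close> \<open>i < n\<close> by (cases "u i = 2"; cases "v i = 2") auto
      ultimately show ?thesis by linarith
    qed
  qed
qed

theorem corollary1:
  fixes n w :: nat and C :: "(nat \<Rightarrow> nat) set"
  assumes "\<forall>u\<in>C. ternary_vec n u"
    and "\<forall>u\<in>C. l1_weight n u = int w"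
  shows "is_code3 n (2 * int w - 2) (int w) C \<longleftrightarrow>
         (clique_packing n C \<and> (\<forall>i<n. \<forall>u\<in>C. \<forall>v\<in>C. u i = 2 \<and> v i = 2 \<longrightarrow> u = v))"
proof -
  have pair: "l1_dist n u v \<ge> 2 * int w - 2 \<longleftrightarrow>
     clique_edges n u \<inter> clique_edges n v = {} \<and> \<not> (\<exists>i<n. u i = 2 \<and> v i = 2)"
    if "u \<in> C" "v \<in> C" for u v
  proof -
    have "l1_dist n u v = 2 * int w - 2 * (\<Sum>i<n. int (min (u i) (v i)))"
      using dist_eq[of n u v] assms that by simp
    then have "l1_dist n u v \<ge> 2 * int w - 2 \<longleftrightarrow> (\<Sum>i<n. int (min (u i) (v i))) \<le> 1" by linarith
    then show ?thesis using sum_min_le1 assms that by blast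
  qed
  have L: "(\<forall>u\<in>C. ternary_vec n u \<and> l1_weight n u = int w)" using assms by blast
  have "(\<forall>u\<in>C. \<forall>v\<in>C. u \<noteq> v \<longrightarrow> l1_dist n u v \<ge> 2 * int w - 2) \<longleftrightarrow>
        (\<forall>u\<in>C. \<forall>v\<in>C. u \<noteq> v \<longrightarrow> clique_edges n u \<inter> clique_edges n v = {} \<and> \<not> (\<exists>i<n. u i = 2 \<and> v i = 2))"
    using pair by blast
  also have "\<dots> \<longleftrightarrow> (clique_packing n C \<and> (\<forall>i<n. \<forall>u\<in>C. \<forall>v\<in>C. u i = 2 \<and> v i = 2 \<longrightarrow> u = v))"
    unfolding clique_packing_def by blast
  finally show ?thesis unfolding is_code3_def using L by blast
qed

end
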